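(* Let $\mu$ be a Borel measure on $\mathbb R$ with $\mu(\mathbb R)=1$ and $\mu(\{0\})\neq1$. Then for every $\sigma\in(0,+\infty)$, \[0<\inf_{\lambda_->0}\frac{\int_{y\in\mathbb R}(e^{\lambda_-y}-1)\,d\mu(y)+\sigma}{\lambda_-}+\inf_{\lambda_+>0}\frac{\int_{y\in\mathbb R}(e^{-\lambda_+y}-1)\,d\mu(y)+\sigma}{\lambda_+}.\]
   Context: The integrals and infima take values in $(-\infty,+\infty]$. *)

theory Defs
  imports "HOL-Analysis.Analysis"
begin

text \<open>Extended-valued integral with values in (-infinity,+infinity] for functions whose negative
  part has finite integral: positive part minus negative part (both as nonnegative integrals).\<close>
definition ext_integral :: "'a measure \<Rightarrow> ('a \<Rightarrow> real) \<Rightarrow> ereal" where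
  "ext_integral M f =
     enn2ereal (\<integral>\<^sup>+ x. ennreal (f x) \<partial>M) - enn2ereal (\<integral>\<^sup>+ x. ennreal (- f x) \<partial>M)"

end

theory Submission
  imports Defs
begin

lemma inf_sum_ge:
  fixes a b :: "real \<Rightarrow> ereal" and S :: "real set" and c :: real
  assumes "\<And>l m. l \<in> S \<Longrightarrow> m \<in> S \<Longrightarrow> ereal c \<le> a l + b m"
  shows "ereal c \<le> (INF l\<in>S. a l) + (INF m\<in>S. b m)"
proof (rule ccontr)
  assume "\<not> ?thesis"
  hence lt: "(INF l\<in>S. a l) + (INF m\<in>S. b m) < ereal c" by simp
  hence A: "(INF l\<in>S. a l) < \<infinity>" and B: "(INF m\<in>S. b m) < \<infinity>"
    by (auto simp: less_top[symmetric])
  obtain x y :: real where xy: "(INF l\<in>S. a l) < ereal x" "(INF m\<in>S. b m) < ereal y" "x + y \<le> c"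
  proof (cases "(INF l\<in>S. a l)" rule: ereal_cases)
    case (real r)
    show ?thesis
    proof (cases "(INF m\<in>S. b m)" rule: ereal_cases)
      case (real q)
      with lt \<open>_ = ereal r\<close> have "r + q < c" by simp
      thus ?thesis using that[of "r + (c - r - q)/2" "q + (c-r-q)/2"] real \<open>_ = ereal r\<close> by auto
    next
      case MInf thus ?thesis using that[of "r+1" "c - r - 1"] real by auto
    qed (use B in auto)
  next
    case MInf
    show ?thesis
    proof (cases "(INF m\<in>S. b m)" rule: ereal_cases)
      case (real q)
      thus ?thesis using that[of "c - q - 1" "q+1"] MInf by auto
    next
      case MInf thus ?thesis using that[of "0" "c"] \<open>(INF l\<in>S. a l) = -\<infinity>\<close> by auto
    qed (use B in auto)
  qed (use A in auto)
  from xy(1) obtain l where l: "l \<in> S" "a l < ereal x" by (auto simp: INF_less_iff)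
  from xy(2) obtain m where m: "m \<in> S" "b m < ereal y" by (auto simp: INF_less_iff)
  have "a l + b m < ereal x + ereal y"
    using l m by (intro ereal_add_strict_mono2) auto
  also have "\<dots> \<le> ereal c" using xy(3) by simp
  finally show False using assms[OF l(1) m(1)] by simp
qed

lemma ext_int_cases:
  fixes M :: "'a measure" and f :: "'a \<Rightarrow> real"
  assumes meas: "f \<in> borel_measurable M" and neg: "(\<integral>\<^sup>+ x. ennreal (- f x) \<partial>M) \<noteq> \<infinity>"
  shows "(integrable M f \<and> ext_integral M f = ereal (integral\<^sup>L M f)) \<or> ext_integral M f = \<infinity>"
proof (cases "(\<integral>\<^sup>+ x. ennreal (f x) \<partial>M) = \<infinity>")
  case True
  obtain q where q: "(\<integral>\<^sup>+ x. ennreal (- f x) \<partial>M) = ennreal q" "q \<ge> 0"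
    using neg by (cases "(\<integral>\<^sup>+ x. ennreal (- f x) \<partial>M)" rule: ennreal_cases) auto
  have "ext_integral M f = \<infinity> - ereal q"
    unfolding ext_integral_def True q using q(2) by (simp add: enn2ereal_ennreal)
  then show ?thesis by simp
next
  case False
  hence int: "integrable M f" using meas neg by (simp add: real_integrable_def)
  have "integral\<^sup>L M f = enn2real (\<integral>\<^sup>+ x. ennreal (f x) \<partial>M) - enn2real (\<integral>\<^sup>+ x. ennreal (- f x) \<partial>M)"
    using int by (rule real_lebesgue_integral_def)
  moreover obtain p q where p: "(\<integral>\<^sup>+ x. ennreal (f x) \<partial>M) = ennreal p" "p \<ge> 0"
    and q: "(\<integral>\<^sup>+ x. ennreal (- f x) \<partial>M) = ennreal q" "q \<ge> 0"
    using False neg by (cases "(\<integral>\<^sup>+ x. ennreal (f x) \<partial>M)" rule: ennreal_cases;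
        cases "(\<integral>\<^sup>+ x. ennreal (- f x) \<partial>M)" rule: ennreal_cases) auto
  ultimately have "integral\<^sup>L M f = p - q" by simp
  moreover have "ext_integral M f = ereal p - ereal q"
    unfolding ext_integral_def p q using p(2) q(2) by (simp only: enn2ereal_ennreal)
  ultimately have "ext_integral M f = ereal (integral\<^sup>L M f)" by simp
  then show ?thesis using int by simp
qed

lemma negpart_fin:
  fixes \<mu> :: "real measure" and g :: "real \<Rightarrow> real"
  assumes "emeasure \<mu> (space \<mu>) = 1" and "\<And>y. g y > 0"
  shows "(\<integral>\<^sup>+ y. ennreal (- (g y - 1)) \<partial>\<mu>) \<noteq> \<infinity>"
proof -
  have "(\<integral>\<^sup>+ y. ennreal (- (g y - 1)) \<partial>\<mu>) \<le> (\<integral>\<^sup>+ y. 1 \<partial>\<mu>)"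
    using assms(2) by (intro nn_integral_mono) (auto simp: less_imp_le)
  also have "\<dots> = 1" using assms(1) by simp
  finally show ?thesis by (auto simp: top_unique)
qed

lemma pointwise:
  fixes l m d y :: real
  assumes "l > 0" "m > 0" "d > 0"
  shows "indicator {y. d \<le> \<bar>y\<bar>} y * max 0 (d - 1 / min l m)
     \<le> (exp (l*y) - 1) / l + (exp (- m * y) - 1) / m"
proof -
  have e1: "(exp (l*y) - 1) / l \<ge> y"
    using exp_ge_add_one_self[of "l*y"] assms by (simp add: field_simps)
  have e2: "(exp (- m*y) - 1) / m \<ge> - y"
    using exp_ge_add_one_self[of "-m*y"] assms by (simp add: field_simps)
  have e3: "(exp (l*y) - 1) / l \<ge> - 1 / l"
    using assms by (simp add: field_simps)
  have e4: "(exp (- m*y) - 1) / m \<ge> - 1 / m"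
    using assms by (simp add: field_simps)
  have m1: "1 / m \<le> 1 / min l m" "1 / l \<le> 1 / min l m"
    using assms by (auto simp: min_def divide_simps)
  show ?thesis
  proof (cases "d \<le> \<bar>y\<bar>")
    case True
    hence "d \<le> y \<or> d \<le> - y" by auto
    hence "d - 1 / min l m \<le> (exp (l*y) - 1) / l + (exp (- m * y) - 1) / m"
      using e1 e2 e3 e4 m1 by auto
    then show ?thesis using True e1 e2 by (simp add: indicator_def)
  next
    case False
    then show ?thesis using e1 e2 by (simp add: indicator_def)
  qed
qed

theorem lemma11:
  fixes \<mu> :: "real measure" and \<sigma> :: real
  assumes "sets \<mu> = sets borel"
    and "emeasure \<mu> UNIV = 1"
    and "emeasure \<mu> {0} \<noteq> 1"
    and "\<sigma> > 0"
  shows "0 < (INF l\<in>{0<..}. (ext_integral \<mu> (\<lambda>y. exp (l * y) - 1) + ereal \<sigma>) / ereal l)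
           + (INF l\<in>{0<..}. (ext_integral \<mu> (\<lambda>y. exp (- l * y) - 1) + ereal \<sigma>) / ereal l)"
proof -
  have sp: "space \<mu> = UNIV" using sets_eq_imp_space_eq[OF assms(1)] by simp
  have meas: "f \<in> borel_measurable \<mu>" if "f \<in> borel_measurable borel" for f :: "real \<Rightarrow> real"
    using that unfolding measurable_cong_sets[OF assms(1) refl] .
  have sets: "A \<in> sets \<mu>" if "A \<in> sets borel" for A using that assms(1) by simp
  have sp1: "emeasure \<mu> (space \<mu>) = 1" using sp assms(2) by simp
  interpret finite_measure \<mu> by (rule finite_measureI) (simp add: sp1)
  obtain d where d: "d > 0" "measure \<mu> {y. d \<le> \<bar>y\<bar>} > 0"
  proof (rule ccontr)
    assume "\<not> thesis"
    hence z: "measure \<mu> {y. 1 / Suc n \<le> \<bar>y\<bar>} = 0" for n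
      using that[of "1 / Suc n"] measure_nonneg[of \<mu>] by (metis of_nat_0_less_iff zero_less_Suc zero_less_divide_1_iff order_less_le)
    have mn: "{y::real. 1 / Suc n \<le> \<bar>y\<bar>} \<in> sets \<mu>" for n by (intro sets) measurable
    have "{y. 1 / Suc n \<le> \<bar>y\<bar>} \<in> null_sets \<mu>" for n
      using z[of n] mn[of n] by (simp add: null_sets_def emeasure_eq_measure)
    hence "(\<Union>n. {y. 1 / Suc n \<le> \<bar>y\<bar>}) \<in> null_sets \<mu>" by (rule null_sets_UN)
    moreover have "UNIV - {0} \<subseteq> (\<Union>n. {y::real. 1 / Suc n \<le> \<bar>y\<bar>})"
    proof
      fix y :: real assume "y \<in> UNIV - {0}"
      hence "y \<noteq> 0" by simp
      then obtain n where "inverse (real (Suc n)) < \<bar>y\<bar>" using reals_Archimedean[of "\<bar>y\<bar>"] by auto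
      hence "1 / Suc n \<le> \<bar>y\<bar>" by (simp add: divide_inverse)
      thus "y \<in> (\<Union>n. {y. 1 / Suc n \<le> \<bar>y\<bar>})" by blast
    qed
    ultimately have "emeasure \<mu> (UNIV - {0}) = 0"
      using null_sets_subset sets by (metis borel_closed closed_singleton sets.Diff sets.top sp null_setsD1)
    moreover have "emeasure \<mu> UNIV = emeasure \<mu> {0} + emeasure \<mu> (UNIV - {0})"
      by (subst plus_emeasure) (auto intro!: sets)
    ultimately show False using assms(2,3) by simp
  qed
  have dset: "{y::real. d \<le> \<bar>y\<bar>} \<in> sets \<mu>" by (intro sets) measurable
  have dint: "integrable \<mu> (indicator {y::real. d \<le> \<bar>y\<bar>} :: real \<Rightarrow> real)"
    using dset by (simp add: integrable_indicator_iff sp less_top[symmetric])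
  define \<epsilon> where "\<epsilon> = measure \<mu> {y. d \<le> \<bar>y\<bar>}"
  define c where "c = min \<epsilon> \<sigma> * d / 2"
  have cpos: "c > 0" using d assms(4) unfolding c_def \<epsilon>_def by auto
  have key: "ereal c \<le> (ext_integral \<mu> (\<lambda>y. exp (l * y) - 1) + ereal \<sigma>) / ereal l
       + (ext_integral \<mu> (\<lambda>y. exp (- m * y) - 1) + ereal \<sigma>) / ereal m"
    if lm: "l \<in> {0<..}" "m \<in> {0<..}" for l m
  proof -
    have l: "l > 0" and m: "m > 0" using lm by auto
    have mf: "(\<lambda>y. exp (l * y) - 1) \<in> borel_measurable \<mu>" by (intro meas) measurable
    have mg: "(\<lambda>y. exp (- m * y) - 1) \<in> borel_measurable \<mu>" by (intro meas) measurable
    have nf: "(\<integral>\<^sup>+ y. ennreal (- (exp (l * y) - 1)) \<partial>\<mu>) \<noteq> \<infinity>" by (rule negpart_fin[OF sp1]) simp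
    have ng: "(\<integral>\<^sup>+ y. ennreal (- (exp (- m * y) - 1)) \<partial>\<mu>) \<noteq> \<infinity>" by (rule negpart_fin[OF sp1]) simp
    show ?thesis
    proof (cases "ext_integral \<mu> (\<lambda>y. exp (l * y) - 1) = \<infinity> \<or> ext_integral \<mu> (\<lambda>y. exp (- m * y) - 1) = \<infinity>")
      case True
      then show ?thesis using l m by auto
    next
      case False
      with ext_int_cases[OF mf nf] ext_int_cases[OF mg ng]
      have if': "integrable \<mu> (\<lambda>y. exp (l * y) - 1)"
        "ext_integral \<mu> (\<lambda>y. exp (l * y) - 1) = ereal (\<integral>y. exp (l * y) - 1 \<partial>\<mu>)"
        and ig: "integrable \<mu> (\<lambda>y. exp (- m * y) - 1)"
        "ext_integral \<mu> (\<lambda>y. exp (- m * y) - 1) = ereal (\<integral>y. exp (- m * y) - 1 \<partial>\<mu>)"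
        by auto
      define F where "F = (\<integral>y. exp (l * y) - 1 \<partial>\<mu>)"
      define G where "G = (\<integral>y. exp (- m * y) - 1 \<partial>\<mu>)"
      define s where "s = min l m"
      have "(\<integral>y. (exp (l*y) - 1) / l + (exp (- m * y) - 1) / m \<partial>\<mu>) = F / l + G / m"
        using if'(1) ig(1) unfolding F_def G_def by simp
      moreover have "(\<integral>y. indicator {y. d \<le> \<bar>y\<bar>} y * max 0 (d - 1 / s) \<partial>\<mu>)
          \<le> (\<integral>y. (exp (l*y) - 1) / l + (exp (- m * y) - 1) / m \<partial>\<mu>)"
        using if'(1) ig(1) pointwise[OF l m d(1)] unfolding s_def
        by (intro integral_mono) (auto intro!: integrable_real_mult_indicator dset dint)
      moreover have "(\<integral>y. indicator {y. d \<le> \<bar>y\<bar>} y * max 0 (d - 1 / s) \<partial>\<mu>) = \<epsilon> * max 0 (d - 1 / s)"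
        unfolding \<epsilon>_def using dset by (subst integral_mult_left_zero) auto
      ultimately have I: "\<epsilon> * max 0 (d - 1 / s) \<le> F / l + G / m" by (simp add: sp \<epsilon>_def)
      have S: "\<sigma> / s \<le> \<sigma> / l + \<sigma> / m" using l m assms(4) unfolding s_def by (auto simp: min_def)
      have epos: "\<epsilon> \<ge> 0" unfolding \<epsilon>_def by simp
      have spos: "s > 0" using l m unfolding s_def by auto
      have "c \<le> \<epsilon> * max 0 (d - 1 / s) + \<sigma> / s"
      proof (cases "s \<ge> 2 / d")
        case True
        hence "1 / s \<le> d / 2" using d(1) spos by (simp add: field_simps)
        hence "d/2 \<le> max 0 (d - 1 / s)" by linarith
        hence "\<epsilon> * (d/2) \<le> \<epsilon> * max 0 (d - 1 / s)" using epos by (rule mult_left_mono)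
        moreover have "c \<le> \<epsilon> * (d/2)" unfolding c_def using d(1) by (auto simp: min_def)
        moreover have "\<sigma> / s \<ge> 0" using spos assms(4) by simp
        ultimately show ?thesis by linarith
      next
        case False
        hence "d / 2 < 1 / s" using d(1) spos by (simp add: field_simps)
        hence "\<sigma> * (d/2) \<le> \<sigma> * (1 / s)" using assms(4) by (intro mult_left_mono) auto
        hence "\<sigma> * (d/2) \<le> \<sigma> / s" by simp
        moreover have "c \<le> \<sigma> * (d/2)" unfolding c_def using d(1) by (auto simp: min_def)
        moreover have "0 \<le> \<epsilon> * max 0 (d - 1 / s)" using epos by simp
        ultimately show ?thesis by linarith
      qed
      hence "c \<le> (F + \<sigma>) / l + (G + \<sigma>) / m" using I S by (simp add: add_divide_distrib)
      then show ?thesis using if'(2) ig(2) l m unfolding F_def[symmetric] G_def[symmetric] by simp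
    qed
  qed
  have "ereal c \<le> (INF l\<in>{0<..}. (ext_integral \<mu> (\<lambda>y. exp (l * y) - 1) + ereal \<sigma>) / ereal l)
           + (INF l\<in>{0<..}. (ext_integral \<mu> (\<lambda>y. exp (- l * y) - 1) + ereal \<sigma>) / ereal l)"
    by (rule inf_sum_ge) (rule key)
  then show ?thesis using cpos by (meson ereal_less(2) less_le_trans)
qed

end
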